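(* Let $K$ be a finite field and $|\cdot|:K\to R$ a multiplicative generalized seminorm. Then $|\cdot|$ is multiplicatively equivalent to the trivial seminorm $|\cdot|_0:K\to\{0,1\}$, given by $|0|_0=0$ and $|x|_0=1$ for $x\neq0$.
   Context: A halo is a commutative unital semiring with a partial order compatible with $+$ and $\cdot$; an aura is a halo whose semiring is a semifield; positive means $0<1$. A generalized seminorm on a ring $A$ is a map $|\cdot|:A\to R$ into a positive totally ordered aura with $|0|=0,|1|=1$, $|a+b|\le|a|+|b|$, $|ab|\le|a||b|$; multiplicative if $|ab|=|a||b|$. The target $\{0,1\}$ is the halo with $0<1$, $1+1=1$ and usual multiplication. Two seminorms $|\cdot|_1,|\cdot|_2$ on $A$ are multiplicatively equivalent if for all $a,b,c\in A$: $|a|_1|c|_1\le|b|_1\iff|a|_2|c|_2\le|b|_2$. *)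

theory Defs
  imports Main
begin

definition halo_compat :: "'r::{comm_semiring_1,order} itself \<Rightarrow> bool" where
  "halo_compat _ \<longleftrightarrow> (\<forall>a b c::'r. a \<le> b \<longrightarrow> a + c \<le> b + c \<and> a * c \<le> b * c)"

definition is_semifield :: "'r::comm_semiring_1 itself \<Rightarrow> bool" where
  "is_semifield _ \<longleftrightarrow> (0::'r) \<noteq> 1 \<and> (\<forall>x::'r. x \<noteq> 0 \<longrightarrow> (\<exists>y. x * y = 1))"

definition pos_tot_aura :: "'r::{comm_semiring_1,linorder} itself \<Rightarrow> bool" where
  "pos_tot_aura T \<longleftrightarrow> halo_compat T \<and> is_semifield T \<and> (0::'r) < 1"

definition gen_seminorm :: "('a::ring_1 \<Rightarrow> 'r::{comm_semiring_1,order}) \<Rightarrow> bool" where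
  "gen_seminorm f \<longleftrightarrow> f 0 = 0 \<and> f 1 = 1 \<and>
     (\<forall>a b. f (a + b) \<le> f a + f b) \<and> (\<forall>a b. f (a * b) \<le> f a * f b)"

definition multiplicative :: "('a::ring_1 \<Rightarrow> 'r::comm_semiring_1) \<Rightarrow> bool" where
  "multiplicative f \<longleftrightarrow> (\<forall>a b. f (a * b) = f a * f b)"

definition mult_equiv ::
  "('a \<Rightarrow> 'r::{times,ord}) \<Rightarrow> ('a \<Rightarrow> 's::{times,ord}) \<Rightarrow> bool" where
  "mult_equiv f g \<longleftrightarrow> (\<forall>a b c. f a * f c \<le> f b \<longleftrightarrow> g a * g c \<le> g b)"

datatype bhalo = BZ | BO

instantiation bhalo :: "{comm_semiring_1, linorder}"
begin
definition "zero_bhalo = BZ"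
definition "one_bhalo = BO"
fun plus_bhalo :: "bhalo \<Rightarrow> bhalo \<Rightarrow> bhalo" where
  "plus_bhalo BZ y = y" | "plus_bhalo BO y = BO"
fun times_bhalo :: "bhalo \<Rightarrow> bhalo \<Rightarrow> bhalo" where
  "times_bhalo BZ y = BZ" | "times_bhalo BO y = y"
fun less_eq_bhalo :: "bhalo \<Rightarrow> bhalo \<Rightarrow> bool" where
  "less_eq_bhalo BZ y = True" | "less_eq_bhalo BO y = (y = BO)"
definition less_bhalo :: "bhalo \<Rightarrow> bhalo \<Rightarrow> bool" where
  "less_bhalo x y \<longleftrightarrow> x \<le> y \<and> \<not> y \<le> x"
instance
proof
  fix a b c :: bhalo
  show "a + b + c = a + (b + c)" by (cases a; cases b; cases c) auto
  show "a + b = b + a" by (cases a; cases b) auto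
  show "0 + a = a" by (simp add: zero_bhalo_def)
  show "a * b * c = a * (b * c)" by (cases a; cases b; cases c) auto
  show "a * b = b * a" by (cases a; cases b) auto
  show "1 * a = a" by (simp add: one_bhalo_def)
  show "0 * a = 0" by (simp add: zero_bhalo_def)
  show "a * 0 = 0" by (cases a) (auto simp: zero_bhalo_def)
  show "(a + b) * c = a * c + b * c" by (cases a; cases b; cases c) auto
  show "(0::bhalo) \<noteq> 1" by (simp add: zero_bhalo_def one_bhalo_def)
  show "(a < b) = (a \<le> b \<and> \<not> b \<le> a)" by (simp add: less_bhalo_def)
  show "a \<le> a" by (cases a) auto
  show "a \<le> b \<Longrightarrow> b \<le> c \<Longrightarrow> a \<le> c" by (cases a; cases b; cases c) auto
  show "a \<le> b \<Longrightarrow> b \<le> a \<Longrightarrow> a = b" by (cases a; cases b) auto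
  show "a \<le> b \<or> b \<le> a" by (cases a; cases b) auto
qed
end

definition triv_seminorm :: "'k::zero \<Rightarrow> bhalo" where
  "triv_seminorm x = (if x = 0 then 0 else 1)"

end

theory Submission
  imports Defs
begin

lemma pow_one_exists:
  fixes x :: "'k::{field,finite}"
  assumes "x \<noteq> 0"
  shows "\<exists>n>0. x ^ n = 1"
proof -
  have "\<not> inj (\<lambda>k::nat. x ^ k)"
  proof
    assume "inj (\<lambda>k::nat. x ^ k)"
    hence "infinite (range (\<lambda>k::nat. x ^ k))"
      using finite_imageD infinite_UNIV_nat by blast
    thus False by simp
  qed
  then obtain i j :: nat where ij: "i \<noteq> j" "x ^ i = x ^ j" unfolding inj_def by blast
  { fix i j :: nat assume "i < j" "x ^ i = x ^ j"
    then have "x ^ i * x ^ (j - i) = x ^ i * 1"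
      by (metis power_add le_add_diff_inverse less_imp_le mult_1_right)
    hence "x ^ (j - i) = 1" using assms by simp
    hence "\<exists>n>0. x ^ n = 1" using \<open>i<j\<close> by (intro exI[of _ "j-i"]) simp }
  note * = this
  show ?thesis using ij *[of i j] *[of j i] by (cases "i < j") auto
qed

theorem lemma3p8:
  fixes v :: "'k::{field,finite} \<Rightarrow> 'r::{comm_semiring_1,linorder}"
  assumes "pos_tot_aura TYPE('r)"
    and "gen_seminorm v"
    and "multiplicative v"
  shows "mult_equiv v (triv_seminorm :: 'k \<Rightarrow> bhalo)"
proof -
  have comp: "\<And>a b c::'r. a \<le> b \<Longrightarrow> a * c \<le> b * c"
    using assms(1) unfolding pos_tot_aura_def halo_compat_def by blast
  have zo: "(0::'r) < 1" using assms(1) unfolding pos_tot_aura_def by blast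
  have nonneg: "\<And>c::'r. 0 \<le> c" using comp[of 0 1] zo by simp
  have v0: "v 0 = 0" and v1: "v 1 = 1" using assms(2) unfolding gen_seminorm_def by auto
  have vm: "\<And>a b. v (a*b) = v a * v b" using assms(3) unfolding multiplicative_def by auto
  have vp: "\<And>n. v (x ^ n) = v x ^ n" for x by (induct_tac n) (simp_all add: v1 vm)
  have le1: "a \<le> 1 \<Longrightarrow> a ^ Suc n \<le> a" for a :: 'r and n
  proof (induct n)
    case (Suc n)
    have "a ^ Suc (Suc n) = a * a ^ Suc n" by simp
    also have "\<dots> \<le> 1 * a ^ Suc n" using comp[OF Suc.prems, of "a ^ Suc n"] .
    finally show ?case using Suc by (metis mult_1 order_trans)
  qed simp
  have ge1: "1 \<le> a \<Longrightarrow> a \<le> a ^ Suc n" for a :: 'r and n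
  proof (induct n)
    case (Suc n)
    have "1 * a ^ Suc n \<le> a * a ^ Suc n" using comp[OF Suc.prems, of "a ^ Suc n"] .
    thus ?case using Suc by (metis mult_1 order_trans power_Suc)
  qed simp
  have vx: "v x = 1" if xnz: "x \<noteq> 0" for x
  proof -
    obtain n where n: "n > 0" "x ^ n = 1" using pow_one_exists[OF xnz] by blast
    then obtain m where m: "n = Suc m" by (cases n) auto
    have e: "v x ^ Suc m = 1" using vp[of x "Suc m"] n m v1 by metis
    show ?thesis
    proof (rule ccontr)
      assume "v x \<noteq> 1"
      hence "v x < 1 \<or> 1 < v x" by auto
      thus False
      proof
        assume "v x < 1" thus False using le1[of "v x" m] e by (metis less_le_not_le)
      next
        assume "1 < v x" thus False using ge1[of "v x" m] e by (metis less_le_not_le)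
      qed
    qed
  qed
  have nle: "\<not> (1::'r) \<le> 0" using zo by simp
  show ?thesis
    unfolding mult_equiv_def triv_seminorm_def
    by (auto simp: v0 vx nonneg nle zero_bhalo_def one_bhalo_def)
qed

end
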